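(* There is a number $c$ with $0<c<\min\{k_0/4,\ k_1|E_0|/2,\ k_2|\pi_0|^2/2\}$ such that $V^{-1}([0,c])$ is a compact subset of $U$ and the set of all critical points of $V$ in $V^{-1}([0,c])$ equals $V^{-1}(0)=\{(R,\Omega): R\in SO(3),\ E(\Omega)=E_0,\ \pi(R,\Omega)=\pi_0\}$.
   Context: $\mathbb I$ is a symmetric positive definite $3\times3$ matrix. $\mathbb R^{3\times3}\times\mathbb R^3$ carries the standard inner product ($\operatorname{trace}(A^TB)$ on matrices), $\|A\|=\sqrt{\operatorname{trace}(A^TA)}$, and gradients are taken with respect to it. Define $E(\Omega)=\tfrac12\Omega^T\mathbb I\Omega$ and $\pi(R,\Omega)=R\mathbb I\Omega$. Fix $R_0\in SO(3)$, $\Omega_0\in\mathbb R^3\setminus\{0\}$, $E_0=E(\Omega_0)$, $\pi_0=\pi(R_0,\Omega_0)$. Let $U=\{(R,\Omega)\in\mathbb R^{3\times3}\times\mathbb R^3:\det R>0\}$ and, with constants $k_0,k_1,k_2>0$, $$V(R,\Omega)=\tfrac{k_0}{4}\|R^TR-I\|^2+\tfrac{k_1}{2}|E(\Omega)-E_0|^2+\tfrac{k_2}{2}|\pi(R,\Omega)-\pi_0|^2$$ on $U$. *)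

theory Defs
  imports "HOL-Analysis.Analysis"
begin

text \<open>Matrices are real^3^3 (inner product = trace(A^T B), norm = Frobenius norm);
  the state space is real^3^3 \<times> real^3 with the product inner product.\<close>

definition SO3 :: "(real^3^3) set" where
  "SO3 = {R. orthogonal_matrix R \<and> det R = 1}"

definition energy :: "real^3^3 \<Rightarrow> real^3 \<Rightarrow> real" where
  "energy II \<Omega> = (1/2) * (\<Omega> \<bullet> (II *v \<Omega>))"

definition momentum :: "real^3^3 \<Rightarrow> real^3^3 \<Rightarrow> real^3 \<Rightarrow> real^3" where
  "momentum II R \<Omega> = R *v (II *v \<Omega>)"

definition Udom :: "((real^3^3) \<times> (real^3)) set" where
  "Udom = {(R, \<Omega>). det R > 0}"

definition Vfun :: "real^3^3 \<Rightarrow> real \<Rightarrow> real \<Rightarrow> real \<Rightarrow> real \<Rightarrow> real^3 \<Rightarrow>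
    (real^3^3) \<times> (real^3) \<Rightarrow> real" where
  "Vfun II k0 k1 k2 E0 \<pi>0 = (\<lambda>(R, \<Omega>).
      k0/4 * (norm (transpose R ** R - mat 1))^2
    + k1/2 * \<bar>energy II \<Omega> - E0\<bar>^2
    + k2/2 * (norm (momentum II R \<Omega> - \<pi>0))^2)"

end

theory Submission
  imports Defs
begin


lemma bb_mm: "bounded_bilinear (\<lambda>(A::real^'n^'m) (B::real^'p^'n). A ** B)"
proof -
  have "bilinear (\<lambda>(A::real^'n^'m) (B::real^'p^'n). A ** B)"
    unfolding bilinear_def
    by (auto intro!: linearI simp: vec_eq_iff matrix_matrix_mult_def sum.distrib sum_distrib_left algebra_simps)
  then show ?thesis by (simp add: bilinear_conv_bounded_bilinear)
qed

lemma bb_mv: "bounded_bilinear (\<lambda>(A::real^'n^'m) (x::real^'n). A *v x)"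
proof -
  have "bilinear (\<lambda>(A::real^'n^'m) (x::real^'n). A *v x)"
    unfolding bilinear_def
    by (auto intro!: linearI simp: vec_eq_iff matrix_vector_mult_def sum.distrib sum_distrib_left algebra_simps)
  then show ?thesis by (simp add: bilinear_conv_bounded_bilinear)
qed

lemma bl_tr: "bounded_linear (transpose :: real^'n^'m \<Rightarrow> real^'m^'n)"
proof -
  have "linear (transpose :: real^'n^'m \<Rightarrow> real^'m^'n)"
    by (auto intro!: linearI simp: transpose_def vec_eq_iff)
  then show ?thesis by (simp add: linear_conv_bounded_linear)
qed


lemmas mm_deriv = bounded_bilinear.FDERIV[OF bb_mm]
lemmas mv_deriv = bounded_bilinear.FDERIV[OF bb_mv]
lemmas tr_deriv = bounded_linear.has_derivative[OF bl_tr]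

lemma transpose_diff: "transpose (A - B) = transpose A - (transpose B :: real^'n^'m)"
  by (simp add: transpose_def vec_eq_iff)
lemma transpose_add: "transpose (A + B) = transpose A + (transpose B :: real^'n^'m)"
  by (simp add: transpose_def vec_eq_iff)

lemma inner_transpose: "inner (A::real^'n^'m) (transpose B) = inner (transpose A) B"
  unfolding inner_vec_def transpose_def
  by (simp add: sum.swap[of _ "UNIV::'n set"] mult.commute)

lemma inner_mv: "inner (x::real^'m) ((A::real^'n^'m) *v y) = inner (transpose A *v x) y"
  by (simp add: dot_lmul_matrix)

lemma V_eq: "Vfun II k0 k1 k2 E0 \<pi>0 = (\<lambda>p. k0/4 * inner (transpose (fst p) ** fst p - mat 1) (transpose (fst p) ** fst p - mat 1)
    + k1/2 * ((1/2) * inner (snd p) (II *v snd p) - E0) * ((1/2) * inner (snd p) (II *v snd p) - E0)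
    + k2/2 * inner (fst p *v (II *v snd p) - \<pi>0) (fst p *v (II *v snd p) - \<pi>0))"
  unfolding Vfun_def energy_def momentum_def by (simp add: fun_eq_iff power2_abs dot_square_norm power2_eq_square)

lemma V_deriv:
  fixes II R :: "real^3^3" and \<Omega> :: "real^3"
  assumes sym: "transpose II = II"
  shows "(Vfun II k0 k1 k2 E0 \<pi>0 has_derivative
   (\<lambda>h. k0 * inner (transpose R ** R - mat 1) (transpose R ** fst h)
       + k1 * (energy II \<Omega> - E0) * inner (snd h) (II *v \<Omega>)
       + k2 * inner (momentum II R \<Omega> - \<pi>0) (fst h *v (II *v \<Omega>) + R *v (II *v snd h)))) (at (R, \<Omega>))"
proof -
  let ?X = "transpose R ** R - mat 1"
  have sX: "transpose ?X = ?X"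
    by (simp add: matrix_transpose_mul transpose_diff)
  have 1: "inner ?X (transpose a ** R) = inner ?X (transpose R ** a)" for a
  proof -
    have "transpose a ** R = transpose (transpose R ** a)" by (simp add: matrix_transpose_mul)
    then show ?thesis using inner_transpose[of ?X "transpose R ** a"] sX by simp
  qed
  have 2: "inner \<Omega> (II *v b) = inner (II *v \<Omega>) b" for b
    using inner_mv[of \<Omega> II b] unfolding sym .
  show ?thesis
  unfolding V_eq
  apply (rule has_derivative_eq_rhs)
   apply (rule derivative_eq_intros mm_deriv mv_deriv tr_deriv refl | assumption)+
  apply (clarsimp simp add: fun_eq_iff)
  apply (simp only: inner_add_right inner_add_left 1 2 energy_def momentum_def)
  apply (simp add: inner_commute field_simps)
  apply (metis 1 inner_commute)
  done
qed



lemma norm_sq_vec: "(norm (x::real^'n))^2 = (\<Sum>i\<in>UNIV. (x$i)^2)"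
  unfolding norm_vec_def L2_set_def by (simp add: sum_nonneg)

lemma norm_sq_mat: "(norm (A::real^'n^'m))^2 = (\<Sum>i\<in>UNIV. (norm (A$i))^2)"
  unfolding norm_vec_def L2_set_def by (simp add: sum_nonneg)

lemma norm_mv_le: "norm ((A::real^'n^'m) *v x) \<le> norm A * norm x"
proof -
  have "(norm (A *v x))^2 = (\<Sum>i\<in>UNIV. (inner (A$i) x)^2)"
    by (simp add: norm_sq_vec matrix_vector_mul_component)
  also have "\<dots> \<le> (\<Sum>i\<in>UNIV. (norm (A$i))^2 * (norm x)^2)"
  proof (rule sum_mono)
    fix i
    have "\<bar>inner (A$i) x\<bar> \<le> norm (A$i) * norm x" by (rule Cauchy_Schwarz_ineq2)
    then have "\<bar>inner (A$i) x\<bar>^2 \<le> (norm (A$i) * norm x)^2" by (rule power_mono) simp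
    then show "(inner (A$i) x)^2 \<le> (norm (A$i))^2 * (norm x)^2" by (simp add: power_mult_distrib)
  qed
  also have "\<dots> = (norm A * norm x)^2"
    by (simp add: norm_sq_mat power_mult_distrib sum_distrib_right)
  finally show ?thesis by (rule power2_le_imp_le) simp
qed

lemma ker_det: "det (M::real^'n^'n) \<noteq> 0 \<Longrightarrow> M *v x = 0 \<Longrightarrow> x = 0"
  using invertible_det_nz[of M] invertible_left_inverse[of M] matrix_left_invertible_ker[of M] by blast

lemma det0_ker: "det (M::real^'n^'n) = 0 \<Longrightarrow> \<exists>x. x \<noteq> 0 \<and> M *v x = 0"
  using invertible_det_nz[of M] invertible_left_inverse[of M] matrix_left_invertible_ker[of M] by blast

lemma inner_mm: "inner (A::real^'n^'m) ((B::real^'k^'m) ** C) = inner (transpose B ** A) C"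
  unfolding inner_vec_def transpose_def matrix_matrix_mult_def
  apply (simp add: sum_distrib_left sum_distrib_right mult_ac)
  apply (rule trans[OF sum.cong[OF refl sum.swap]])
  apply (rule trans[OF sum.swap])
  apply (rule sum.cong[OF refl sum.swap])
  done

definition outer :: "real^'m \<Rightarrow> real^'n \<Rightarrow> real^'n^'m" where
  "outer e w = (\<chi> i j. e$i * w$j)"

lemma inner_outer: "inner (e::real^'m) ((H::real^'n^'m) *v w) = inner (outer e w) H"
  unfolding inner_vec_def outer_def matrix_vector_mult_def
  by (simp add: sum_distrib_left sum_distrib_right algebra_simps)

lemma outer_mv: "outer e w *v x = inner w x *\<^sub>R (e::real^'m)"
  unfolding inner_vec_def outer_def matrix_vector_mult_def
  by (simp add: vec_eq_iff sum_distrib_left sum_distrib_right algebra_simps)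




lemma sym_inner: "transpose (M::real^'n^'n) = M \<Longrightarrow> inner x (M *v y) = inner (M *v x) y"
  using inner_mv[of x M y] by simp

lemma coercive:
  assumes pd: "\<And>x::real^'n. x \<noteq> 0 \<Longrightarrow> x \<bullet> (II *v x) > 0"
  shows "\<exists>m>0. \<forall>x::real^'n. m * (norm x)^2 \<le> x \<bullet> (II *v x)"
proof -
  let ?f = "\<lambda>x::real^'n. x \<bullet> (II *v x)"
  have cont: "continuous_on (sphere 0 1) ?f"
    by (intro continuous_on_inner continuous_on_id linear_continuous_on) (simp add: linear_conv_bounded_linear[symmetric])
  have ne: "sphere (0::real^'n) 1 \<noteq> {}"
    by (simp add: sphere_eq_empty)
  obtain x0 where x0: "x0 \<in> sphere 0 1" and min: "\<And>y. y \<in> sphere 0 1 \<Longrightarrow> ?f x0 \<le> ?f y"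
    using continuous_attains_inf[OF compact_sphere ne cont] by blast
  have x0nz: "x0 \<noteq> 0" using x0 by auto
  have mpos: "?f x0 > 0" using pd[OF x0nz] .
  have "?f x0 * (norm x)^2 \<le> ?f x" for x
  proof (cases "x = 0")
    case True then show ?thesis by simp
  next
    case False
    let ?u = "(1/norm x) *\<^sub>R x"
    have "?u \<in> sphere 0 1" using False by (simp add: norm_scaleR)
    then have "?f x0 \<le> ?f ?u" by (rule min)
    also have "?f ?u = ?f x / (norm x)^2"
      by (simp add: matrix_vector_mult_scaleR inner_scaleR_left inner_scaleR_right power2_eq_square)
    finally show ?thesis using False by (simp add: field_simps)
  qed
  then show ?thesis using mpos by blast
qed

lemma eig_finite:
  assumes sym: "transpose (II::real^'n^'n) = II"
  shows "finite {l. \<exists>x. x \<noteq> 0 \<and> II *v x = l *\<^sub>R x}"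
proof -
  define L where "L = {l. \<exists>x. x \<noteq> 0 \<and> II *v x = l *\<^sub>R x}"
  define v where "v l = (SOME x. x \<noteq> 0 \<and> II *v x = l *\<^sub>R x)" for l
  have v: "v l \<noteq> 0 \<and> II *v v l = l *\<^sub>R v l" if "l \<in> L" for l
  proof -
    from that obtain x where "x \<noteq> 0 \<and> II *v x = l *\<^sub>R x" unfolding L_def by blast
    then show ?thesis unfolding v_def by (rule someI)
  qed
  have inj: "inj_on v L"
  proof (rule inj_onI)
    fix a b assume a: "a \<in> L" and b: "b \<in> L" and e: "v a = v b"
    have "a *\<^sub>R v a = b *\<^sub>R v a" using v[OF a] v[OF b] e by metis
    then show "a = b" using v[OF a] by simp
  qed
  have orth: "pairwise orthogonal (v ` L)"
  proof (clarsimp simp: pairwise_def)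
    fix a b assume a: "a \<in> L" and b: "b \<in> L" and ne: "v a \<noteq> v b"
    have "a \<noteq> b" using ne by auto
    have "a * inner (v a) (v b) = inner (II *v v a) (v b)" using v[OF a] by simp
    also have "\<dots> = inner (v a) (II *v v b)" using sym_inner[OF sym] by simp
    also have "\<dots> = b * inner (v a) (v b)" using v[OF b] by simp
    finally have "(a - b) * inner (v a) (v b) = 0" by (simp add: algebra_simps)
    then show "orthogonal (v a) (v b)" using \<open>a \<noteq> b\<close> by (simp add: orthogonal_def)
  qed
  have "0 \<notin> v ` L" using v by auto
  then have "independent (v ` L)" using pairwise_orthogonal_independent[OF orth] by blast
  then have "finite (v ` L)" by (rule finiteI_independent)
  then have "finite L" using finite_imageD[OF _ inj] by blast
  then show ?thesis unfolding L_def .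
qed




lemma crit_parts:
  fixes II R :: "real^3^3" and \<Omega> \<pi>0 :: "real^3"
  assumes sym: "transpose II = II"
   and pd: "\<And>x::real^3. x \<noteq> 0 \<Longrightarrow> x \<bullet> (II *v x) > 0"
   and D: "\<And>H \<eta>. k0 * inner (transpose R ** R - mat 1) (transpose R ** H)
       + k1 * (energy II \<Omega> - E0) * inner \<eta> (II *v \<Omega>)
       + k2 * inner (momentum II R \<Omega> - \<pi>0) (H *v (II *v \<Omega>) + R *v (II *v \<eta>)) = 0"
  shows "(k1 * (energy II \<Omega> - E0)) *\<^sub>R \<Omega> + k2 *\<^sub>R (transpose R *v (momentum II R \<Omega> - \<pi>0)) = 0"
    and "\<And>x. k0 *\<^sub>R (R *v ((transpose R ** R - mat 1) *v x))
           + (k2 * inner (II *v \<Omega>) x) *\<^sub>R (momentum II R \<Omega> - \<pi>0) = 0"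
proof -
  define A where "A = transpose R ** R - mat 1"
  define e where "e = momentum II R \<Omega> - \<pi>0"
  define w where "w = II *v \<Omega>"
  define d where "d = energy II \<Omega> - E0"
  define f where "f = transpose R *v e"
  define z where "z = (k1 * d) *\<^sub>R \<Omega> + k2 *\<^sub>R f"
  have D0: "k1 * d * inner \<eta> w + k2 * inner e (R *v (II *v \<eta>)) = 0" for \<eta>
    using D[of 0 \<eta>] unfolding A_def e_def w_def d_def by simp
  have "inner e (R *v (II *v \<eta>)) = inner (II *v f) \<eta>" for \<eta>
  proof -
    have "inner e (R *v (II *v \<eta>)) = inner f (II *v \<eta>)" unfolding f_def by (rule inner_mv)
    also have "\<dots> = inner (II *v f) \<eta>" by (rule sym_inner[OF sym])
    finally show ?thesis .
  qed
  then have "inner (II *v z) \<eta> = 0" for \<eta>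
    using D0[of \<eta>] unfolding z_def w_def
    by (simp add: matrix_vector_right_distrib matrix_vector_mult_scaleR inner_add_left inner_add_right inner_commute)
  then have "inner (II *v z) (II *v z) = 0" by blast
  then have "II *v z = 0" by simp
  then have "z = 0" using pd[of z] by (metis inner_zero_right less_irrefl)
  then show "(k1 * (energy II \<Omega> - E0)) *\<^sub>R \<Omega> + k2 *\<^sub>R (transpose R *v (momentum II R \<Omega> - \<pi>0)) = 0"
    unfolding z_def d_def f_def e_def .
  define M where "M = k0 *\<^sub>R (R ** A) + k2 *\<^sub>R outer e w"
  have "inner M H = 0" for H
  proof -
    have "inner A (transpose R ** H) = inner (R ** A) H" using inner_mm[of A "transpose R" H] by simp
    moreover have "inner e (H *v w) = inner (outer e w) H" by (rule inner_outer)
    ultimately show ?thesis using D[of H 0] unfolding M_def A_def e_def w_def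
      by (simp add: inner_add_left)
  qed
  then have "inner M M = 0" by blast
  then have M0: "M = 0" by simp
  fix x
  have "M *v x = 0" using M0 by simp
  then show "k0 *\<^sub>R (R *v ((transpose R ** R - mat 1) *v x))
           + (k2 * inner (II *v \<Omega>) x) *\<^sub>R (momentum II R \<Omega> - \<pi>0) = 0"
    unfolding M_def A_def e_def w_def
    by (simp add: matrix_vector_mult_add_rdistrib outer_mv matrix_vector_mul_assoc flip: scaleR_matrix_vector_assoc)
qed




declare transpose_matrix_vector[simp del]

lemma RtR: "transpose R *v (R *v y) = (transpose R ** R - mat 1) *v y + (y::real^'n)"
  by (simp add: matrix_vector_mul_assoc matrix_vector_mult_diff_rdistrib)

lemma crit_d0:
  fixes II R :: "real^3^3" and \<Omega> \<pi>0 :: "real^3"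
  assumes P1: "(k1 * d) *\<^sub>R \<Omega> + k2 *\<^sub>R (transpose R *v e) = 0"
    and P2: "\<And>x. k0 *\<^sub>R (R *v (A *v x)) + (k2 * inner w x) *\<^sub>R e = 0"
    and k: "k0 > 0" "k2 > 0" and detR: "det R \<noteq> 0" and d: "d = 0"
  shows "e = 0" "A = 0"
proof -
  have "transpose R *v e = 0" using P1 d k by simp
  then show e0: "e = 0" using ker_det[of "transpose R" e] detR by simp
  have "A *v x = 0" for x
  proof -
    have "R *v (A *v x) = 0" using P2[of x] e0 k by simp
    then show ?thesis using ker_det[of R] detR by blast
  qed
  then show "A = 0" by (simp add: matrix_eq)
qed


lemma crit_dnz:
  fixes II R A :: "real^3^3" and \<Omega> e w :: "real^3"
  assumes P1: "(k1 * d) *\<^sub>R \<Omega> + k2 *\<^sub>R (transpose R *v e) = 0"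
    and P2: "\<And>x. k0 *\<^sub>R (R *v (A *v x)) + (k2 * inner w x) *\<^sub>R e = 0"
    and k: "k0 > 0" "k1 > 0" "k2 > 0" and detR: "det R \<noteq> 0" and d: "d \<noteq> 0"
    and A: "A = transpose R ** R - mat 1" and nA: "norm A < 1"
    and Om: "\<Omega> \<noteq> 0" and wpos: "inner w \<Omega> > 0"
  shows "\<exists>l a. w = l *\<^sub>R \<Omega> \<and> A *v \<Omega> = a *\<^sub>R \<Omega> \<and> \<bar>a\<bar> \<le> norm A
      \<and> a * (1 + a) * k0 = k1 * d * l * (norm \<Omega>)^2
      \<and> l * (norm \<Omega>)^2 = inner w \<Omega>
      \<and> R *v w - e = (l + (k1 * d / k2) / (1 + a)) *\<^sub>R (R *v \<Omega>)
      \<and> (norm (R *v \<Omega>))^2 = (1 + a) * (norm \<Omega>)^2"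
proof -
  have symA: "transpose A = A" unfolding A by (simp add: matrix_transpose_mul transpose_diff)
  have RtR': "transpose R *v (R *v y) = A *v y + y" for y unfolding A by (rule RtR)
  have f: "transpose R *v e = (- (k1 * d / k2)) *\<^sub>R \<Omega>"
  proof -
    have "k2 *\<^sub>R (transpose R *v e) = - ((k1 * d) *\<^sub>R \<Omega>)" using P1 by (simp add: eq_neg_iff_add_eq_0 add.commute)
    then have "(1/k2) *\<^sub>R (k2 *\<^sub>R (transpose R *v e)) = (1/k2) *\<^sub>R (- ((k1 * d) *\<^sub>R \<Omega>))" by simp
    then show ?thesis using k by simp
  qed
  define B where "B x = A *v (A *v x) + A *v x" for x
  have Eq3: "k0 *\<^sub>R B x = (k1 * d * inner w x) *\<^sub>R \<Omega>" for x
  proof -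
    have "transpose R *v (k0 *\<^sub>R (R *v (A *v x)) + (k2 * inner w x) *\<^sub>R e) = 0" using P2[of x] by simp
    then have "k0 *\<^sub>R (A *v (A *v x) + A *v x) + (k2 * inner w x) *\<^sub>R (transpose R *v e) = 0"
      by (simp add: matrix_vector_right_distrib matrix_vector_mult_scaleR RtR')
    then show ?thesis unfolding B_def f using k by (simp add: algebra_simps)
  qed
  have symB: "inner y (B x) = inner (B y) x" for x y
    unfolding B_def using sym_inner[OF symA] by (simp add: inner_add_left inner_add_right)
  have cross: "inner w x * inner y \<Omega> = inner w y * inner \<Omega> x" for x y
  proof -
    have "inner y (k0 *\<^sub>R B x) = inner (k0 *\<^sub>R B y) x" using symB by simp
    then have "k1 * d * (inner w x * inner y \<Omega>) = k1 * d * (inner w y * inner \<Omega> x)"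
      unfolding Eq3 by (simp add: algebra_simps)
    then show ?thesis using k d by simp
  qed
  have nO: "inner \<Omega> \<Omega> > 0" using Om by simp
  define l where "l = inner w \<Omega> / inner \<Omega> \<Omega>"
  have "inner (w - l *\<^sub>R \<Omega>) x = 0" for x
  proof -
    have "inner w x * inner \<Omega> \<Omega> = inner w \<Omega> * inner \<Omega> x" using cross[of x \<Omega>] .
    then have "inner w x = l * inner \<Omega> x" unfolding l_def using nO by (simp add: field_simps)
    then show ?thesis by (simp add: inner_diff_left)
  qed
  then have "inner (w - l *\<^sub>R \<Omega>) (w - l *\<^sub>R \<Omega>) = 0" by blast
  then have wl: "w = l *\<^sub>R \<Omega>" by simp
  define mu where "mu = k1 * d * l / k0"
  have Eq4: "B x = (mu * inner \<Omega> x) *\<^sub>R \<Omega>" for x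
  proof -
    have "k0 *\<^sub>R B x = k0 *\<^sub>R ((mu * inner \<Omega> x) *\<^sub>R \<Omega>)"
      unfolding Eq3 wl mu_def using k by (simp add: algebra_simps)
    then show ?thesis using k by (metis less_irrefl scaleR_cancel_left)
  qed
  have lpos: "l > 0" unfolding l_def using wpos nO by simp
  have mu0: "mu \<noteq> 0" unfolding mu_def using k d lpos by simp
  have BA: "B (A *v \<Omega>) = A *v B \<Omega>"
    unfolding B_def by (simp add: matrix_vector_right_distrib)
  have "(mu * inner \<Omega> (A *v \<Omega>)) *\<^sub>R \<Omega> = (mu * inner \<Omega> \<Omega>) *\<^sub>R (A *v \<Omega>)"
    using BA unfolding Eq4 by (simp add: matrix_vector_mult_scaleR)
  then have "(inner \<Omega> (A *v \<Omega>)) *\<^sub>R \<Omega> = (inner \<Omega> \<Omega>) *\<^sub>R (A *v \<Omega>)"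
    using mu0 by (metis scaleR_cancel_left scaleR_scaleR)
  define a where "a = inner \<Omega> (A *v \<Omega>) / inner \<Omega> \<Omega>"
  have AO: "A *v \<Omega> = a *\<^sub>R \<Omega>"
  proof -
    have "(1 / inner \<Omega> \<Omega>) *\<^sub>R ((inner \<Omega> (A *v \<Omega>)) *\<^sub>R \<Omega>) = (1 / inner \<Omega> \<Omega>) *\<^sub>R ((inner \<Omega> \<Omega>) *\<^sub>R (A *v \<Omega>))"
      using \<open>(inner \<Omega> (A *v \<Omega>)) *\<^sub>R \<Omega> = (inner \<Omega> \<Omega>) *\<^sub>R (A *v \<Omega>)\<close> by simp
    then show ?thesis using nO unfolding a_def by simp
  qed
  have "\<bar>inner \<Omega> (A *v \<Omega>)\<bar> \<le> norm \<Omega> * (norm A * norm \<Omega>)"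
    using Cauchy_Schwarz_ineq2[of \<Omega> "A *v \<Omega>"] norm_mv_le[of A \<Omega>]
    by (meson mult_left_mono norm_ge_zero order_trans)
  then have aA: "\<bar>a\<bar> \<le> norm A" unfolding a_def using nO
    by (simp add: abs_div dot_square_norm power2_eq_square field_simps mult_ac)
  have BO: "B \<Omega> = (a * a + a) *\<^sub>R \<Omega>" unfolding B_def by (simp add: AO matrix_vector_mult_scaleR algebra_simps)
  have "(a * a + a) *\<^sub>R \<Omega> = (mu * inner \<Omega> \<Omega>) *\<^sub>R \<Omega>" using Eq4[of \<Omega>] BO by simp
  then have "a * a + a = mu * inner \<Omega> \<Omega>" using Om by simp
  then have rel: "a * (1 + a) * k0 = k1 * d * l * (norm \<Omega>)^2"
    unfolding mu_def using k by (simp add: dot_square_norm field_simps)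
  have lrel: "l * (norm \<Omega>)^2 = inner w \<Omega>" unfolding l_def using nO by (simp add: dot_square_norm)
  have a1: "1 + a > 0" using aA nA by linarith
  define s where "s = k1 * d / k2"
  have fs: "transpose R *v e = (- s) *\<^sub>R \<Omega>" using f unfolding s_def by simp
  have sc: "(s / (1 + a)) * (a + 1) = s" using a1 by (simp add: field_simps)
  have "transpose R *v (e + (s / (1 + a)) *\<^sub>R (R *v \<Omega>)) = (- s) *\<^sub>R \<Omega> + (s / (1 + a)) *\<^sub>R (a *\<^sub>R \<Omega> + \<Omega>)"
    by (simp add: matrix_vector_right_distrib matrix_vector_mult_scaleR RtR' AO fs)
  also have "\<dots> = (- s + (s / (1 + a)) * (a + 1)) *\<^sub>R \<Omega>" by (simp add: scaleR_add_right scaleR_add_left distrib_left scaleR_diff_left)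
  also have "\<dots> = 0" by (simp only: sc) simp
  finally have "transpose R *v (e + (s / (1 + a)) *\<^sub>R (R *v \<Omega>)) = 0" .
  then have eq: "e = - ((s / (1 + a)) *\<^sub>R (R *v \<Omega>))"
    using ker_det[of "transpose R"] detR by (simp add: eq_neg_iff_add_eq_0)
  have p: "R *v w - e = (l + s / (1 + a)) *\<^sub>R (R *v \<Omega>)"
    unfolding eq wl by (simp add: matrix_vector_mult_scaleR algebra_simps)
  have n: "(norm (R *v \<Omega>))^2 = (1 + a) * (norm \<Omega>)^2"
  proof -
    have "(norm (R *v \<Omega>))^2 = inner (R *v \<Omega>) (R *v \<Omega>)" by (simp add: dot_square_norm)
    also have "\<dots> = inner (transpose R *v (R *v \<Omega>)) \<Omega>" by (rule inner_mv)
    also have "\<dots> = inner \<Omega> (transpose R *v (R *v \<Omega>))" by (rule inner_commute)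
    also have "\<dots> = (1 + a) * (norm \<Omega>)^2" unfolding RtR' AO by (simp add: dot_square_norm algebra_simps)
    finally show ?thesis .
  qed
  show ?thesis using wl AO aA rel lrel p n unfolding s_def by blast
qed




lemma scalar_main:
  fixes l a d N E0 \<kappa> m MI k0 k1 \<epsilon> \<sigma> :: real
  assumes m: "m > 0" "m \<le> l" "l \<le> MI" and N: "N > 0" and E0: "E0 > 0" and kp: "\<kappa> > 0" "k0 > 0" "k1 > 0"
    and rel: "a * (1 + a) * k0 = k1 * d * l * N" and lN: "l * N = 2 * (E0 + d)"
    and ae: "\<bar>a\<bar> \<le> \<epsilon>" and de: "\<bar>d\<bar> \<le> \<epsilon>" and e1: "\<epsilon> \<le> 1/2" and e2: "\<epsilon> \<le> E0/2"
    and e3: "\<kappa> * \<epsilon> \<le> m/2" and d0: "d \<noteq> 0" and sg: "\<sigma> = \<kappa> * d / (1 + a)"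
  shows "(l + \<sigma>)^2 * (1 + a) * N - 2 * l * E0 \<noteq> 0"
    and "\<bar>(l + \<sigma>)^2 * (1 + a) * N - 2 * l * E0\<bar> \<le> ((3 * E0 / m) * (MI^2 + 9 * MI * \<kappa>) + 2 * MI) * \<epsilon>"
proof -
  have lpos: "l > 0" using m by linarith
  have a1: "1 + a \<ge> 1/2" using ae e1 by linarith
  have MIp: "MI > 0" using m by linarith
  have ep: "\<epsilon> \<ge> 0" using de by linarith
  have MKE: "0 \<le> MI * (\<epsilon> * \<kappa>)" using MIp ep kp by simp
  have T: "(l + \<sigma>)^2 * (1 + a) * N - 2 * l * E0 = N * ((l + \<sigma>)^2 * (1 + a) - l^2) + 2 * l * d"
  proof -
    have "2 * l * E0 = l * (l * N) - 2 * l * d" using lN by (simp add: algebra_simps)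
    then show ?thesis by (simp add: algebra_simps power2_eq_square)
  qed
  have sabs: "\<bar>\<sigma>\<bar> \<le> 2 * \<kappa> * \<epsilon>"
  proof -
    have "\<bar>\<sigma>\<bar> = \<kappa> * \<bar>d\<bar> / (1 + a)" using sg kp a1 by (simp add: abs_mult abs_div)
    also have "\<dots> \<le> \<kappa> * \<epsilon> / (1/2)"
      by (rule frac_le) (use kp de a1 e1 in auto)
    finally show ?thesis by simp
  qed
  have sl: "\<bar>\<sigma>\<bar> \<le> l" using sabs e3 m by linarith
  show "(l + \<sigma>)^2 * (1 + a) * N - 2 * l * E0 \<noteq> 0"
  proof (cases "d > 0")
    case True
    have "k1 * d * l * N > 0" using True lpos N kp by simp
    then have "a * (1 + a) * k0 > 0" using rel by simp
    then have "a * (1 + a) > 0" using kp by (simp add: zero_less_mult_iff)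
    then have apos: "a > 0" using a1 by (simp add: zero_less_mult_iff)
    have spos: "\<sigma> > 0" using sg kp True a1 by simp
    have "(l + \<sigma>)^2 > l^2" using spos lpos by (simp add: power_strict_mono)
    then have "(l + \<sigma>)^2 * (1 + a) > l^2 * 1" using apos
      by (intro mult_strict_mono) auto
    then have "N * ((l + \<sigma>)^2 * (1 + a) - l^2) > 0" using N by simp
    moreover have "2 * l * d > 0" using lpos True by simp
    ultimately show ?thesis unfolding T by linarith
  next
    case False
    then have dneg: "d < 0" using d0 by simp
    have "a * (1 + a) < 0"
    proof -
      have "k1 * d < 0" using dneg kp by (simp add: mult_pos_neg)
      then have "k1 * d * l < 0" using lpos by (simp add: mult_neg_pos)
      then have "k1 * d * l * N < 0" using N by (simp add: mult_neg_pos)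
      then have "a * (1 + a) * k0 < 0" using rel by simp
      then show ?thesis using kp by (simp add: mult_less_0_iff)
    qed
    then have aneg: "a < 0" using a1 by (simp add: mult_less_0_iff)
    have sneg: "\<sigma> < 0" using sg kp dneg a1 by (simp add: divide_neg_pos mult_pos_neg)
    have "0 \<le> l + \<sigma>" using sl by linarith
    then have "(l + \<sigma>)^2 < l^2" using sneg lpos by (simp add: power_strict_mono)
    moreover have "(l + \<sigma>)^2 * (1 + a) \<le> (l + \<sigma>)^2" using aneg a1 by (simp add: mult_left_le)
    ultimately have "N * ((l + \<sigma>)^2 * (1 + a) - l^2) < 0" using N by (simp add: mult_pos_neg)
    moreover have "2 * l * d < 0" using lpos dneg by (simp add: mult_pos_neg)
    ultimately show ?thesis unfolding T by linarith
  qed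
  have X: "(l + \<sigma>)^2 * (1 + a) - l^2 = l^2 * a + (2 * l * \<sigma> + \<sigma>^2) * (1 + a)"
    by (simp add: algebra_simps power2_eq_square)
  have b1: "\<bar>l^2 * a\<bar> \<le> MI^2 * \<epsilon>"
  proof -
    have "\<bar>l^2 * a\<bar> = l^2 * \<bar>a\<bar>" by (simp add: abs_mult)
    also have "\<dots> \<le> MI^2 * \<epsilon>" using m lpos ae by (intro mult_mono power_mono) auto
    finally show ?thesis .
  qed
  have b2: "\<bar>2 * l * \<sigma> + \<sigma>^2\<bar> \<le> 6 * MI * \<kappa> * \<epsilon>"
  proof -
    have "\<bar>2 * l * \<sigma> + \<sigma>^2\<bar> \<le> \<bar>2 * l * \<sigma>\<bar> + \<bar>\<sigma>^2\<bar>" by (rule abs_triangle_ineq)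
    also have "\<dots> = 2 * l * \<bar>\<sigma>\<bar> + \<bar>\<sigma>\<bar> * \<bar>\<sigma>\<bar>" using lpos by (simp add: abs_mult power2_eq_square)
    also have "\<dots> \<le> 2 * l * \<bar>\<sigma>\<bar> + l * \<bar>\<sigma>\<bar>" using mult_right_mono[OF sl, of "\<bar>\<sigma>\<bar>"] by linarith
    also have "\<dots> = 3 * l * \<bar>\<sigma>\<bar>" by simp
    also have "\<dots> \<le> 3 * MI * (2 * \<kappa> * \<epsilon>)" using m lpos sabs by (intro mult_mono) auto
    finally show ?thesis by simp
  qed
  have b3: "\<bar>(2 * l * \<sigma> + \<sigma>^2) * (1 + a)\<bar> \<le> 9 * MI * \<kappa> * \<epsilon>"
  proof -
    have "1 + a \<le> 3/2" using ae e1 by linarith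
    have "\<bar>(2 * l * \<sigma> + \<sigma>^2) * (1 + a)\<bar> = \<bar>2 * l * \<sigma> + \<sigma>^2\<bar> * (1 + a)" using a1 by (simp add: abs_mult)
    also have "\<dots> \<le> (6 * MI * \<kappa> * \<epsilon>) * (3/2)" using b2 a1 \<open>1 + a \<le> 3/2\<close> MKE by (intro mult_mono) auto
    finally show ?thesis by (simp add: mult_ac)
  qed
  have bX: "\<bar>(l + \<sigma>)^2 * (1 + a) - l^2\<bar> \<le> (MI^2 + 9 * MI * \<kappa>) * \<epsilon>"
  proof -
    have "\<bar>l^2 * a + (2 * l * \<sigma> + \<sigma>^2) * (1 + a)\<bar> \<le> \<bar>l^2 * a\<bar> + \<bar>(2 * l * \<sigma> + \<sigma>^2) * (1 + a)\<bar>" by (rule abs_triangle_ineq)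
    moreover have "(MI^2 + 9 * MI * \<kappa>) * \<epsilon> = MI^2 * \<epsilon> + 9 * MI * \<kappa> * \<epsilon>" by (simp add: distrib_right)
    ultimately show ?thesis unfolding X using b1 b3 by linarith
  qed
  have Nb: "N \<le> 3 * E0 / m"
  proof -
    have "l * N = 2 * E0 + 2 * d" using lN by simp
    then have "l * N \<le> 3 * E0" using abs_le_D1[OF de] e2 by linarith
    then have "m * N \<le> 3 * E0" using m N by (smt (verit) mult_right_mono)
    then show ?thesis using m by (simp add: field_simps)
  qed
  have t1: "\<bar>N * ((l + \<sigma>)^2 * (1 + a) - l^2)\<bar> \<le> (3 * E0 / m) * ((MI^2 + 9 * MI * \<kappa>) * \<epsilon>)"
    unfolding abs_mult using N Nb bX by (intro mult_mono) auto
  have t2: "\<bar>2 * l * d\<bar> \<le> 2 * MI * \<epsilon>" using lpos m de by (simp add: abs_mult) (intro mult_mono; auto)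
  show "\<bar>(l + \<sigma>)^2 * (1 + a) * N - 2 * l * E0\<bar> \<le> ((3 * E0 / m) * (MI^2 + 9 * MI * \<kappa>) + 2 * MI) * \<epsilon>"
  proof -
    have "\<bar>N * ((l + \<sigma>)^2 * (1 + a) - l^2) + 2 * l * d\<bar> \<le> \<bar>N * ((l + \<sigma>)^2 * (1 + a) - l^2)\<bar> + \<bar>2 * l * d\<bar>" by (rule abs_triangle_ineq)
    moreover have "((3 * E0 / m) * (MI^2 + 9 * MI * \<kappa>) + 2 * MI) * \<epsilon> = (3 * E0 / m) * ((MI^2 + 9 * MI * \<kappa>) * \<epsilon>) + 2 * MI * \<epsilon>" by (simp add: distrib_right)
    ultimately show ?thesis unfolding T using t1 t2 by linarith
  qed
qed




lemma cont_det: "continuous_on UNIV (\<lambda>p::(real^3^3) \<times> (real^3). det (fst p))"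
  unfolding det_def
  by (intro continuous_intros)

lemma Vsplit: "Vfun II k0 k1 k2 E0 \<pi>0 (R, \<Omega>) = k0/4 * (norm (transpose R ** R - mat 1))^2
   + k1/2 * (energy II \<Omega> - E0)^2 + k2/2 * (norm (momentum II R \<Omega> - \<pi>0))^2"
  by (simp add: Vfun_def power2_abs)

lemma normR_bound: "(norm (R::real^3^3))^2 \<le> norm (transpose R ** R - mat 1) * norm (mat 1 :: real^3^3) + (norm (mat 1 :: real^3^3))^2"
proof -
  have "(norm R)^2 = inner R (R ** mat 1)" by (simp add: dot_square_norm)
  also have "\<dots> = inner (transpose R ** R) (mat 1)" by (rule inner_mm)
  also have "\<dots> = inner (transpose R ** R - mat 1) (mat 1) + inner (mat 1) (mat 1 :: real^3^3)"
    by (simp add: inner_diff_left)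
  also have "\<dots> \<le> norm (transpose R ** R - mat 1) * norm (mat 1 :: real^3^3) + (norm (mat 1 :: real^3^3))^2"
    using norm_cauchy_schwarz[of "transpose R ** R - mat 1" "mat 1"] by (simp add: dot_square_norm)
  finally show ?thesis .
qed





theorem lemma4:
  fixes II R0 :: "real^3^3" and \<Omega>0 :: "real^3" and k0 k1 k2 :: real
  assumes II_sym: "transpose II = II"
    and II_pd: "\<And>x::real^3. x \<noteq> 0 \<Longrightarrow> x \<bullet> (II *v x) > 0"
    and R0: "R0 \<in> SO3"
    and \<Omega>0: "\<Omega>0 \<noteq> 0"
    and k: "k0 > 0" "k1 > 0" "k2 > 0"
  shows "\<exists>c. 0 < c \<and>
     c < min (k0/4) (min (k1 * \<bar>energy II \<Omega>0\<bar> / 2) (k2 * (norm (momentum II R0 \<Omega>0))^2 / 2)) \<and>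
     (let V = Vfun II k0 k1 k2 (energy II \<Omega>0) (momentum II R0 \<Omega>0);
          S = {p \<in> Udom. V p \<in> {0..c}} in
        compact S \<and> S \<subseteq> Udom \<and>
        {p \<in> S. GDERIV V p :> 0} = {p \<in> Udom. V p = 0} \<and>
        {p \<in> Udom. V p = 0} = {(R, \<Omega>). R \<in> SO3 \<and> energy II \<Omega> = energy II \<Omega>0
                                   \<and> momentum II R \<Omega> = momentum II R0 \<Omega>0})"
proof -
  define E0 where "E0 = energy II \<Omega>0"
  define \<pi>0 where "\<pi>0 = momentum II R0 \<Omega>0"
  define V where "V = Vfun II k0 k1 k2 E0 \<pi>0"
  have E0pos: "E0 > 0" using II_pd[OF \<Omega>0] unfolding E0_def energy_def by simp
  have detR0: "det R0 = 1" using R0 unfolding SO3_def by simp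
  have pi0nz: "\<pi>0 \<noteq> 0"
  proof
    assume "\<pi>0 = 0"
    then have "R0 *v (II *v \<Omega>0) = 0" unfolding \<pi>0_def momentum_def .
    then have "II *v \<Omega>0 = 0" using ker_det[of R0] detR0 by simp
    then show False using II_pd[OF \<Omega>0] by simp
  qed
  define nP where "nP = (norm \<pi>0)^2"
  have nPpos: "nP > 0" unfolding nP_def using pi0nz by simp
  obtain m where mpos: "m > 0" and mcoer: "\<And>x::real^3. m * (norm x)^2 \<le> x \<bullet> (II *v x)"
    using coercive[OF II_pd] by blast
  define MI where "MI = norm II"
  define \<kappa> where "\<kappa> = k1 / k2"
  have kappa: "\<kappa> > 0" unfolding \<kappa>_def using k by simp
  define K where "K = (3 * E0 / m) * (MI^2 + 9 * MI * \<kappa>) + 2 * MI"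
  have K0: "K \<ge> 0" unfolding K_def MI_def using E0pos mpos kappa by simp
  define \<Lambda> where "\<Lambda> = {l. \<exists>x. x \<noteq> 0 \<and> II *v x = l *\<^sub>R x}"
  have finL: "finite \<Lambda>" unfolding \<Lambda>_def by (rule eig_finite[OF II_sym])
  define G where "G = (\<lambda>l. \<bar>nP - 2 * l * E0\<bar>) ` {l \<in> \<Lambda>. nP \<noteq> 2 * l * E0}"
  have finG: "finite (insert 1 G)" unfolding G_def using finL by simp
  define \<eta> where "\<eta> = Min (insert 1 G)"
  have etapos: "\<eta> > 0" unfolding \<eta>_def using finG by (simp add: Min_gr_iff G_def)
  have etale: "\<eta> \<le> \<bar>nP - 2 * l * E0\<bar>" if "l \<in> \<Lambda>" "nP \<noteq> 2 * l * E0" for l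
    unfolding \<eta>_def using finG that by (intro Min_le) (auto simp: G_def)
  define \<epsilon> where "\<epsilon> = min (min (1/2) (E0/2)) (min (m / (2 * \<kappa>)) (\<eta> / (2 * (K + 1))))"
  have epos: "\<epsilon> > 0" unfolding \<epsilon>_def using E0pos mpos kappa etapos K0 by simp
  have ea: "\<epsilon> \<le> min (1/2) (E0/2)" unfolding \<epsilon>_def by (rule min.cobounded1)
  have eb: "\<epsilon> \<le> min (m / (2 * \<kappa>)) (\<eta> / (2 * (K + 1)))" unfolding \<epsilon>_def by (rule min.cobounded2)
  have e1: "\<epsilon> \<le> 1/2" and e2: "\<epsilon> \<le> E0/2" using ea by auto
  have e3: "\<kappa> * \<epsilon> \<le> m / 2"
  proof -
    have "\<epsilon> \<le> m / (2 * \<kappa>)" using eb by auto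
    then show ?thesis using kappa by (simp add: field_simps)
  qed
  have e4: "K * \<epsilon> < \<eta>"
  proof -
    have "\<epsilon> \<le> \<eta> / (2 * (K + 1))" using eb by auto
    then have "\<epsilon> * (2 * (K + 1)) \<le> \<eta>" using K0 by (simp add: field_simps)
    moreover have "\<epsilon> * (2 * (K + 1)) = 2 * (K * \<epsilon>) + 2 * \<epsilon>" by (simp add: algebra_simps)
    moreover have "K * \<epsilon> \<ge> 0" using K0 epos by simp
    ultimately show ?thesis using epos by linarith
  qed
  define c where "c = min (k0 * \<epsilon>^2 / 4) (min (k1 * \<epsilon>^2 / 2) (k2 * nP / 4))"
  have cpos: "c > 0" unfolding c_def using k epos nPpos by simp
  have cbound: "c < min (k0/4) (min (k1 * \<bar>E0\<bar> / 2) (k2 * (norm \<pi>0)^2 / 2))"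
  proof -
    have c1: "c \<le> k0 * \<epsilon>^2 / 4" unfolding c_def by (rule min.cobounded1)
    have "c \<le> min (k1 * \<epsilon>^2 / 2) (k2 * nP / 4)" unfolding c_def by (rule min.cobounded2)
    then have c2: "c \<le> k1 * \<epsilon>^2 / 2" and c3: "c \<le> k2 * nP / 4" by auto
    have sq: "\<epsilon>^2 \<le> \<epsilon> / 2" using e1 epos by (simp add: power2_eq_square mult_left_mono[of _ "1/2" \<epsilon>, simplified])
    have "k0 * \<epsilon>^2 / 4 < k0 / 4" using sq e1 k by (simp add: field_simps)
    moreover have "k1 * \<epsilon>^2 / 2 < k1 * \<bar>E0\<bar> / 2" using sq e2 E0pos k by (simp add: field_simps)
    moreover have "k2 * nP / 4 < k2 * (norm \<pi>0)^2 / 2" using nPpos k unfolding nP_def by simp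
    ultimately show ?thesis using c1 c2 c3 by simp
  qed
  define S where "S = {p \<in> Udom. V p \<in> {0..c}}"
  have Vnn: "V p \<ge> 0" for p
    unfolding V_def by (cases p) (simp add: Vsplit k less_imp_le)
  have small: "norm (transpose R ** R - mat 1) \<le> \<epsilon> \<and> \<bar>energy II \<Omega> - E0\<bar> \<le> \<epsilon>" if "(R, \<Omega>) \<in> S" for R \<Omega>
  proof -
    have Vc: "V (R, \<Omega>) \<le> c" using that unfolding S_def by simp
    have c1: "c \<le> k0 * \<epsilon>^2 / 4" unfolding c_def by (rule min.cobounded1)
    have "c \<le> min (k1 * \<epsilon>^2 / 2) (k2 * nP / 4)" unfolding c_def by (rule min.cobounded2)
    then have c2: "c \<le> k1 * \<epsilon>^2 / 2" by auto
    have t2: "0 \<le> k1/2 * (energy II \<Omega> - E0)^2" and t3: "0 \<le> k2/2 * (norm (momentum II R \<Omega> - \<pi>0))^2"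
      and t1: "0 \<le> k0/4 * (norm (transpose R ** R - mat 1))^2" using k by simp_all
    have V3: "V (R, \<Omega>) = k0/4 * (norm (transpose R ** R - mat 1))^2 + k1/2 * (energy II \<Omega> - E0)^2 + k2/2 * (norm (momentum II R \<Omega> - \<pi>0))^2"
      unfolding V_def by (rule Vsplit)
    have "k0/4 * (norm (transpose R ** R - mat 1))^2 \<le> k0/4 * \<epsilon>^2" using V3 Vc c1 t2 t3 by linarith
    then have "(norm (transpose R ** R - mat 1))^2 \<le> \<epsilon>^2" using k by simp
    then have A: "norm (transpose R ** R - mat 1) \<le> \<epsilon>" using epos by (simp add: power2_le_iff_abs_le)
    have "k1/2 * (energy II \<Omega> - E0)^2 \<le> k1/2 * \<epsilon>^2" using V3 Vc c2 t1 t3 by linarith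
    then have "(energy II \<Omega> - E0)^2 \<le> \<epsilon>^2" using k by simp
    then have "\<bar>energy II \<Omega> - E0\<bar> \<le> \<epsilon>" using epos by (simp add: power2_le_iff_abs_le)
    with A show ?thesis by simp
  qed
  have zero_iff: "V (R, \<Omega>) = 0 \<longleftrightarrow> transpose R ** R = mat 1 \<and> energy II \<Omega> = E0 \<and> momentum II R \<Omega> = \<pi>0" for R \<Omega>
  proof -
    have t2: "0 \<le> k1/2 * (energy II \<Omega> - E0)^2" and t3: "0 \<le> k2/2 * (norm (momentum II R \<Omega> - \<pi>0))^2"
      and t1: "0 \<le> k0/4 * (norm (transpose R ** R - mat 1))^2" using k by simp_all
    have V3: "V (R, \<Omega>) = k0/4 * (norm (transpose R ** R - mat 1))^2 + k1/2 * (energy II \<Omega> - E0)^2 + k2/2 * (norm (momentum II R \<Omega> - \<pi>0))^2"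
      unfolding V_def by (rule Vsplit)
    have "V (R, \<Omega>) = 0 \<longleftrightarrow> k0/4 * (norm (transpose R ** R - mat 1))^2 = 0 \<and> k1/2 * (energy II \<Omega> - E0)^2 = 0 \<and> k2/2 * (norm (momentum II R \<Omega> - \<pi>0))^2 = 0"
      using V3 t1 t2 t3 by linarith
    also have "\<dots> \<longleftrightarrow> transpose R ** R = mat 1 \<and> energy II \<Omega> = E0 \<and> momentum II R \<Omega> = \<pi>0"
      using k by simp
    finally show ?thesis .
  qed
  have V3: "V (R, \<Omega>) = k0/4 * (norm (transpose R ** R - mat 1))^2 + k1/2 * (energy II \<Omega> - E0)^2 + k2/2 * (norm (momentum II R \<Omega> - \<pi>0))^2" for R \<Omega>
    unfolding V_def by (rule Vsplit)
  have compS: "compact S"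
  proof -
    have Seq: "S = {p. 0 \<le> det (fst p)} \<inter> {p. V p \<le> c}"
    proof (rule set_eqI)
      fix p :: "(real^3^3) \<times> (real^3)"
      obtain R \<Omega> where p: "p = (R, \<Omega>)" by (cases p)
      have "det R \<noteq> 0" if Vc: "V (R, \<Omega>) \<le> c"
      proof
        assume "det R = 0"
        then obtain x where x: "x \<noteq> 0" "R *v x = 0" using det0_ker by blast
        have "transpose R *v (R *v x) = (transpose R ** R - mat 1) *v x + x" by (rule RtR)
        then have "(transpose R ** R - mat 1) *v x = - x" using x by (simp add: eq_neg_iff_add_eq_0)
        then have "norm x \<le> norm (transpose R ** R - mat 1) * norm x"
          using norm_mv_le[of "transpose R ** R - mat 1" x] by simp
        then have n1: "1 \<le> norm (transpose R ** R - mat 1)" using x by simp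
        then have "1 \<le> (norm (transpose R ** R - mat 1))^2" by (simp add: one_le_power)
        then have "k0/4 \<le> k0/4 * (norm (transpose R ** R - mat 1))^2" using k by simp
        moreover have "0 \<le> k1/2 * (energy II \<Omega> - E0)^2" "0 \<le> k2/2 * (norm (momentum II R \<Omega> - \<pi>0))^2"
          using k by simp_all
        ultimately have "k0/4 \<le> V (R, \<Omega>)" unfolding V3 by linarith
        then show False using Vc cbound by simp
      qed
      then show "p \<in> S \<longleftrightarrow> p \<in> {p. 0 \<le> det (fst p)} \<inter> {p. V p \<le> c}"
        unfolding p S_def Udom_def using Vnn[of "(R, \<Omega>)"] by force
    qed
    have contV: "continuous_on UNIV V"
    proof (rule continuous_at_imp_continuous_on, rule ballI)
      fix p :: "(real^3^3) \<times> (real^3)"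
      obtain R \<Omega> where p: "p = (R, \<Omega>)" by (cases p)
      show "isCont V p" unfolding p V_def
        by (rule has_derivative_continuous[OF V_deriv[OF II_sym]])
    qed
    have closedS: "closed S" unfolding Seq
      by (intro closed_Int closed_Collect_le continuous_on_const cont_det contV)
    define B1 where "B1 = norm (mat 1 :: real^3^3) + (norm (mat 1 :: real^3^3))^2"
    define B2 where "B2 = 3 * E0 / m"
    have sqb: "x \<le> B + 1" if "x \<ge> 0" "x^2 \<le> B" for x B :: real
    proof (cases "x \<le> 1")
      case True then show ?thesis using that by (smt (verit) zero_le_power2)
    next
      case False then have "x \<le> x^2" by (simp add: power2_eq_square)
      then show ?thesis using that by linarith
    qed
    have "norm p \<le> (B1 + 1) + (B2 + 1)" if "p \<in> S" for p
    proof -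
      obtain R \<Omega> where p: "p = (R, \<Omega>)" by (cases p)
      have sm: "norm (transpose R ** R - mat 1) \<le> \<epsilon>" "\<bar>energy II \<Omega> - E0\<bar> \<le> \<epsilon>"
        using small[of R \<Omega>] that p by auto
      have "(norm R)^2 \<le> norm (transpose R ** R - mat 1) * norm (mat 1 :: real^3^3) + (norm (mat 1 :: real^3^3))^2"
        by (rule normR_bound)
      also have "\<dots> \<le> 1 * norm (mat 1 :: real^3^3) + (norm (mat 1 :: real^3^3))^2"
        using sm e1 by (intro add_right_mono mult_right_mono) auto
      finally have R: "norm R \<le> B1 + 1" unfolding B1_def by (intro sqb) auto
      have "m * (norm \<Omega>)^2 \<le> \<Omega> \<bullet> (II *v \<Omega>)" by (rule mcoer)
      also have "\<dots> = 2 * energy II \<Omega>" unfolding energy_def by simp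
      also have "\<dots> \<le> 3 * E0" using sm e2 by (simp add: abs_le_iff)
      finally have "(norm \<Omega>)^2 \<le> B2" unfolding B2_def using mpos by (simp add: field_simps)
      then have O: "norm \<Omega> \<le> B2 + 1" by (intro sqb) auto
      have "norm p \<le> norm R + norm \<Omega>" unfolding p by (rule norm_Pair_le)
      then show ?thesis using R O by linarith
    qed
    then have "bounded S" unfolding bounded_iff by blast
    then show ?thesis using closedS by (simp add: compact_eq_bounded_closed)
  qed
  have crit: "{p \<in> S. GDERIV V p :> 0} = {p \<in> Udom. V p = 0}"
  proof (rule set_eqI, rule iffI)
    fix p :: "(real^3^3) \<times> (real^3)"
    obtain R \<Omega> where p: "p = (R, \<Omega>)" by (cases p)
    assume "p \<in> {p \<in> S. GDERIV V p :> 0}"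
    then have pS: "(R, \<Omega>) \<in> S" and gd: "(V has_derivative (\<lambda>h. inner h 0)) (at (R, \<Omega>))"
      unfolding p gderiv_def by auto
    define D where "D = (\<lambda>h :: (real^3^3) \<times> (real^3). k0 * inner (transpose R ** R - mat 1) (transpose R ** fst h)
       + k1 * (energy II \<Omega> - E0) * inner (snd h) (II *v \<Omega>)
       + k2 * inner (momentum II R \<Omega> - \<pi>0) (fst h *v (II *v \<Omega>) + R *v (II *v snd h)))"
    have Vd: "(V has_derivative D) (at (R, \<Omega>))" unfolding V_def D_def by (rule V_deriv[OF II_sym])
    have "D = (\<lambda>h. inner h 0)" by (rule has_derivative_unique[OF Vd gd])
    then have D0: "\<And>H \<eta>. k0 * inner (transpose R ** R - mat 1) (transpose R ** H)
       + k1 * (energy II \<Omega> - E0) * inner \<eta> (II *v \<Omega>)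
       + k2 * inner (momentum II R \<Omega> - \<pi>0) (H *v (II *v \<Omega>) + R *v (II *v \<eta>)) = 0"
      unfolding D_def by (metis (no_types, lifting) fst_conv snd_conv inner_zero_right)
    note P = crit_parts[OF II_sym II_pd D0]
    have detR: "det R \<noteq> 0" using pS unfolding S_def Udom_def by auto
    have pU: "(R, \<Omega>) \<in> Udom" using pS unfolding S_def by auto
    show "p \<in> {p \<in> Udom. V p = 0}"
    proof (cases "energy II \<Omega> - E0 = 0")
      case True
      note z = crit_d0[OF P(1) P(2) k(1) k(3) detR True]
      have "V (R, \<Omega>) = 0" unfolding zero_iff using z True by simp
      then show ?thesis using pU p by simp
    next
      case False
      have sm: "norm (transpose R ** R - mat 1) \<le> \<epsilon>" "\<bar>energy II \<Omega> - E0\<bar> \<le> \<epsilon>"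
        using small[OF pS] by auto
      have nA1: "norm (transpose R ** R - mat 1) < 1" using sm e1 by linarith
      have Om: "\<Omega> \<noteq> 0"
      proof
        assume "\<Omega> = 0"
        then have "energy II \<Omega> = 0" unfolding energy_def by simp
        then show False using sm e2 E0pos by simp
      qed
      have wpos: "inner (II *v \<Omega>) \<Omega> > 0" using II_pd[OF Om] by (simp add: inner_commute)
      obtain l a where la: "II *v \<Omega> = l *\<^sub>R \<Omega>" "(transpose R ** R - mat 1) *v \<Omega> = a *\<^sub>R \<Omega>"
          "\<bar>a\<bar> \<le> norm (transpose R ** R - mat 1)"
          "a * (1 + a) * k0 = k1 * (energy II \<Omega> - E0) * l * (norm \<Omega>)^2"
          "l * (norm \<Omega>)^2 = inner (II *v \<Omega>) \<Omega>"
          "R *v (II *v \<Omega>) - (momentum II R \<Omega> - \<pi>0) = (l + (k1 * (energy II \<Omega> - E0) / k2) / (1 + a)) *\<^sub>R (R *v \<Omega>)"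
          "(norm (R *v \<Omega>))^2 = (1 + a) * (norm \<Omega>)^2"
        using crit_dnz[OF P(1) P(2) k detR False refl nA1 Om wpos] by blast
      define d where "d = energy II \<Omega> - E0"
      define N where "N = (norm \<Omega>)^2"
      define \<sigma> where "\<sigma> = \<kappa> * d / (1 + a)"
      have Npos: "N > 0" unfolding N_def using Om by simp
      have lL: "l \<in> \<Lambda>" unfolding \<Lambda>_def using la(1) Om by blast
      have ml: "m \<le> l"
      proof -
        have "m * N \<le> l * N" unfolding N_def using mcoer[of \<Omega>] la(5) by (simp add: inner_commute)
        then show ?thesis using Npos by simp
      qed
      have lMI: "l \<le> MI"
      proof -
        have "l * N = inner (II *v \<Omega>) \<Omega>" unfolding N_def by (rule la(5))
        also have "\<dots> \<le> norm (II *v \<Omega>) * norm \<Omega>" by (rule norm_cauchy_schwarz)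
        also have "\<dots> \<le> (MI * norm \<Omega>) * norm \<Omega>" unfolding MI_def
          by (rule mult_right_mono[OF norm_mv_le norm_ge_zero])
        also have "\<dots> = MI * N" unfolding N_def by (simp add: power2_eq_square)
        finally show ?thesis using Npos by simp
      qed
      have lN: "l * N = 2 * (E0 + d)"
      proof -
        have "l * N = inner (II *v \<Omega>) \<Omega>" unfolding N_def by (rule la(5))
        also have "\<dots> = 2 * energy II \<Omega>" unfolding energy_def by (simp add: inner_commute)
        finally show ?thesis unfolding d_def by simp
      qed
      have ae: "\<bar>a\<bar> \<le> \<epsilon>" using la(3) sm by linarith
      have de: "\<bar>d\<bar> \<le> \<epsilon>" unfolding d_def using sm by simp
      have d0: "d \<noteq> 0" unfolding d_def using False .
      have rel: "a * (1 + a) * k0 = k1 * d * l * N" unfolding d_def N_def by (rule la(4))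
      have "\<pi>0 = (l + \<sigma>) *\<^sub>R (R *v \<Omega>)"
      proof -
        have "(k1 * d / k2) / (1 + a) = \<sigma>" unfolding \<sigma>_def \<kappa>_def by simp
        then show ?thesis using la(6) unfolding momentum_def d_def by simp
      qed
      then have nPeq: "nP = (l + \<sigma>)^2 * (1 + a) * N"
        unfolding nP_def N_def using la(7) by (simp add: power_mult_distrib)
      note sc = scalar_main[OF mpos ml lMI Npos E0pos kappa k(1) k(2) rel lN ae de e1 e2 e3 d0 \<sigma>_def]
      have Tne: "nP \<noteq> 2 * l * E0" using sc(1) nPeq by simp
      have "\<bar>nP - 2 * l * E0\<bar> \<le> K * \<epsilon>" using sc(2) nPeq unfolding K_def by simp
      moreover have "\<eta> \<le> \<bar>nP - 2 * l * E0\<bar>" by (rule etale[OF lL Tne])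
      ultimately show ?thesis using e4 by linarith
    qed
  next
    fix p :: "(real^3^3) \<times> (real^3)"
    obtain R \<Omega> where p: "p = (R, \<Omega>)" by (cases p)
    assume "p \<in> {p \<in> Udom. V p = 0}"
    then have pU: "(R, \<Omega>) \<in> Udom" and V0: "V (R, \<Omega>) = 0" unfolding p by auto
    have z: "transpose R ** R - mat 1 = 0" "energy II \<Omega> - E0 = 0" "momentum II R \<Omega> - \<pi>0 = 0"
      using V0 unfolding zero_iff by auto
    have "(R, \<Omega>) \<in> S" unfolding S_def using pU V0 cpos by simp
    moreover have "GDERIV V (R, \<Omega>) :> 0"
      unfolding gderiv_def V_def
      by (rule has_derivative_eq_rhs[OF V_deriv[OF II_sym]]) (simp add: z fun_eq_iff)
    ultimately show "p \<in> {p \<in> S. GDERIV V p :> 0}" unfolding p by simp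
  qed
  have zeroset: "{p \<in> Udom. V p = 0} = {(R, \<Omega>). R \<in> SO3 \<and> energy II \<Omega> = E0 \<and> momentum II R \<Omega> = \<pi>0}"
  proof (rule set_eqI)
    fix p :: "(real^3^3) \<times> (real^3)"
    obtain R \<Omega> where p: "p = (R, \<Omega>)" by (cases p)
    have "R \<in> SO3 \<longleftrightarrow> det R > 0 \<and> transpose R ** R = mat 1"
    proof
      assume "R \<in> SO3" then show "det R > 0 \<and> transpose R ** R = mat 1"
        unfolding SO3_def by (simp add: orthogonal_matrix)
    next
      assume a: "det R > 0 \<and> transpose R ** R = mat 1"
      then have o: "orthogonal_matrix R" by (simp add: orthogonal_matrix)
      then have "det R = 1 \<or> det R = -1" by (rule det_orthogonal_matrix)
      then show "R \<in> SO3" using a o unfolding SO3_def by auto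
    qed
    then show "p \<in> {p \<in> Udom. V p = 0} \<longleftrightarrow> p \<in> {(R, \<Omega>). R \<in> SO3 \<and> energy II \<Omega> = E0 \<and> momentum II R \<Omega> = \<pi>0}"
      unfolding p Udom_def using zero_iff by auto
  qed
  have "S \<subseteq> Udom" unfolding S_def by auto
  then show ?thesis
    using cpos cbound compS crit zeroset unfolding Let_def S_def V_def E0_def \<pi>0_def
    by blast
qed


end
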